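(* Consider a finite reward-free MDP with occupancy polytope $\Phi$. Let $\mathcal D=\{(d_e^k,\epsilon^k)\}_{k=1}^K$ with $d_e^k\in\Phi$, $\epsilon^k\ge0$, let $d_e'\in\Phi$, $\epsilon'\ge0$, and $\mathcal D^+:=\mathcal D\cup\{(d_e',\epsilon')\}$. Let $\mathcal R^\star\subseteq\Delta(S\times A)$ be the ground-truth reward set and suppose the consistency assumption holds for $\mathcal D$ and $\mathcal D^+$, i.e. $\mathcal R^\star\subseteq\mathcal R(\mathcal D)$ and $\mathcal R^\star\subseteq\mathcal R(\mathcal D^+)$. Then \[\mathcal R^\star\subseteq\mathcal R(\mathcal D^+)\subsetneq\mathcal R(\mathcal D)\quad\text{if and only if}\quad \epsilon'<\max_{r\in\mathcal R(\mathcal D)}\mathrm{subopt}(r,d_e').\]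
   Context: The MDP has finite $S$, $A$, transitions $P$, initial distribution $\mu_0$, discount $\gamma\in(0,1)$; $(Md)(s)=\sum_a d(s,a)-\gamma\sum_{s',a'}P(s\mid s',a')d(s',a')$ and $\Phi=\{d\ge0:Md=(1-\gamma)\mu_0\}$. Rewards are $r\in\Delta(S\times A)$. $\mathrm{subopt}(r,d):=\max_{\tilde d\in\Phi}r^\top\tilde d-r^\top d$. For a dataset $\mathcal D=\{(d_e^k,\epsilon^k)\}_k$, $\mathcal R(\mathcal D):=\{r\in\Delta(S\times A):\mathrm{subopt}(r,d_e^k)\le\epsilon^k\ \forall k\}$. *)

theory Defs
  imports Complex_Main
begin

text \<open>Transition kernel P s (s',a') = P(s | s',a'); initial distribution mu0; discount gamma.\<close>

definition is_kernel :: "('s::finite \<Rightarrow> 's \<times> 'a::finite \<Rightarrow> real) \<Rightarrow> bool" where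
  "is_kernel P \<longleftrightarrow> (\<forall>s' a'. (\<forall>s. P s (s',a') \<ge> 0) \<and> (\<Sum>s\<in>UNIV. P s (s',a')) = 1)"

definition is_distr :: "('x::finite \<Rightarrow> real) \<Rightarrow> bool" where
  "is_distr f \<longleftrightarrow> (\<forall>x. f x \<ge> 0) \<and> (\<Sum>x\<in>UNIV. f x) = 1"

definition flowM :: "('s::finite \<Rightarrow> 's \<times> 'a::finite \<Rightarrow> real) \<Rightarrow> real \<Rightarrow> ('s \<times> 'a \<Rightarrow> real) \<Rightarrow> 's \<Rightarrow> real" where
  "flowM P \<gamma> d s = (\<Sum>a\<in>UNIV. d (s,a)) - \<gamma> * (\<Sum>sa\<in>UNIV. P s sa * d sa)"

definition Occ :: "('s::finite \<Rightarrow> 's \<times> 'a::finite \<Rightarrow> real) \<Rightarrow> ('s \<Rightarrow> real) \<Rightarrow> real \<Rightarrow> ('s \<times> 'a \<Rightarrow> real) set" where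
  "Occ P \<mu>0 \<gamma> = {d. (\<forall>x. d x \<ge> 0) \<and> (\<forall>s. flowM P \<gamma> d s = (1 - \<gamma>) * \<mu>0 s)}"

definition inner_sa :: "('x::finite \<Rightarrow> real) \<Rightarrow> ('x \<Rightarrow> real) \<Rightarrow> real" where
  "inner_sa r d = (\<Sum>x\<in>UNIV. r x * d x)"

definition Rewards :: "('s::finite \<times> 'a::finite \<Rightarrow> real) set" where
  "Rewards = {r. is_distr r}"

text \<open>subopt(r,d) = max_{d'\<in>Phi} r.d' - r.d (the max is attained; written as Sup)\<close>
definition subopt :: "('s::finite \<Rightarrow> 's \<times> 'a::finite \<Rightarrow> real) \<Rightarrow> ('s \<Rightarrow> real) \<Rightarrow> real
    \<Rightarrow> ('s \<times> 'a \<Rightarrow> real) \<Rightarrow> ('s \<times> 'a \<Rightarrow> real) \<Rightarrow> real" where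
  "subopt P \<mu>0 \<gamma> r d = Sup ((\<lambda>d'. inner_sa r d') ` Occ P \<mu>0 \<gamma>) - inner_sa r d"

definition RD :: "('s::finite \<Rightarrow> 's \<times> 'a::finite \<Rightarrow> real) \<Rightarrow> ('s \<Rightarrow> real) \<Rightarrow> real
    \<Rightarrow> (('s \<times> 'a \<Rightarrow> real) \<times> real) list \<Rightarrow> ('s \<times> 'a \<Rightarrow> real) set" where
  "RD P \<mu>0 \<gamma> D = {r \<in> Rewards. \<forall>(de, \<epsilon>) \<in> set D. subopt P \<mu>0 \<gamma> r de \<le> \<epsilon>}"

end

theory Submission
  imports Defs
begin

lemma occ_sum:
  fixes P :: "'s::finite \<Rightarrow> 's \<times> 'a::finite \<Rightarrow> real"
  assumes K: "is_kernel P" and M: "is_distr \<mu>0" and g: "\<gamma> < 1"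
    and d: "d \<in> Occ P \<mu>0 \<gamma>"
  shows "(\<Sum>x\<in>UNIV. d x) = 1"
proof -
  have fl: "\<And>s. flowM P \<gamma> d s = (1 - \<gamma>) * \<mu>0 s" using d by (simp add: Occ_def)
  have "(\<Sum>s\<in>UNIV. flowM P \<gamma> d s) = (\<Sum>s\<in>UNIV. (1 - \<gamma>) * \<mu>0 s)" using fl by simp
  also have "\<dots> = 1 - \<gamma>" using M by (simp add: is_distr_def sum_distrib_left[symmetric])
  finally have e1: "(\<Sum>s\<in>UNIV. flowM P \<gamma> d s) = 1 - \<gamma>" .
  have A: "(\<Sum>s\<in>UNIV. \<Sum>a\<in>UNIV. d (s,a)) = (\<Sum>x\<in>UNIV. d x)"
    by (simp add: sum.cartesian_product UNIV_Times_UNIV[symmetric] del: UNIV_Times_UNIV)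
  have B: "(\<Sum>s\<in>UNIV. \<Sum>sa\<in>UNIV. P s sa * d sa) = (\<Sum>sa\<in>UNIV. (\<Sum>s\<in>UNIV. P s sa) * d sa)"
    by (subst sum.swap) (simp add: sum_distrib_right)
  also have "\<dots> = (\<Sum>sa\<in>UNIV. d sa)"
    using K by (intro sum.cong) (auto simp: is_kernel_def)
  finally have B': "(\<Sum>s\<in>UNIV. \<Sum>sa\<in>UNIV. P s sa * d sa) = (\<Sum>x\<in>UNIV. d x)" .
  have "(\<Sum>s\<in>UNIV. flowM P \<gamma> d s) = (\<Sum>x\<in>UNIV. d x) - \<gamma> * (\<Sum>x\<in>UNIV. d x)"
    unfolding flowM_def sum_subtractf sum_distrib_left[symmetric] A B' ..
  with e1 have "(1 - \<gamma>) * (\<Sum>x\<in>UNIV. d x) = (1 - \<gamma>) * 1" by (simp add: algebra_simps)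
  then show ?thesis using g by simp
qed

lemma inner_bounds:
  fixes P :: "'s::finite \<Rightarrow> 's \<times> 'a::finite \<Rightarrow> real"
  assumes K: "is_kernel P" and M: "is_distr \<mu>0" and g: "\<gamma> < 1"
    and d: "d \<in> Occ P \<mu>0 \<gamma>" and r: "r \<in> Rewards"
  shows "0 \<le> inner_sa r d" "inner_sa r d \<le> 1"
proof -
  have dn: "\<And>x. d x \<ge> 0" using d unfolding Occ_def by blast
  have rn: "\<And>x. r x \<ge> 0" and rs: "(\<Sum>x\<in>UNIV. r x) = 1" using r by (auto simp: Rewards_def is_distr_def)
  have r1: "r x \<le> 1" for x
  proof -
    have "r x \<le> (\<Sum>x\<in>UNIV. r x)" by (rule member_le_sum) (auto simp: rn)
    then show ?thesis using rs by simp
  qed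
  show "0 \<le> inner_sa r d" unfolding inner_sa_def by (intro sum_nonneg) (simp add: rn dn)
  have "inner_sa r d \<le> (\<Sum>x\<in>UNIV. d x)" unfolding inner_sa_def
    by (intro sum_mono) (metis dn mult_right_mono r1 mult_1)
  then show "inner_sa r d \<le> 1" using occ_sum[OF K M g d] by simp
qed

lemma subopt_bounds:
  fixes P :: "'s::finite \<Rightarrow> 's \<times> 'a::finite \<Rightarrow> real"
  assumes K: "is_kernel P" and M: "is_distr \<mu>0" and g: "\<gamma> < 1"
    and d: "d \<in> Occ P \<mu>0 \<gamma>" and r: "r \<in> Rewards"
  shows "0 \<le> subopt P \<mu>0 \<gamma> r d" "subopt P \<mu>0 \<gamma> r d \<le> 1"
proof -
  have bdd: "bdd_above ((\<lambda>d'. inner_sa r d') ` Occ P \<mu>0 \<gamma>)"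
    using inner_bounds(2)[OF K M g _ r] by (auto intro!: bdd_aboveI)
  have "inner_sa r d \<le> Sup ((\<lambda>d'. inner_sa r d') ` Occ P \<mu>0 \<gamma>)"
    using bdd d by (intro cSup_upper) auto
  then show "0 \<le> subopt P \<mu>0 \<gamma> r d" by (simp add: subopt_def)
  have "Sup ((\<lambda>d'. inner_sa r d') ` Occ P \<mu>0 \<gamma>) \<le> 1"
    using d inner_bounds(2)[OF K M g _ r] by (intro cSup_least) auto
  then show "subopt P \<mu>0 \<gamma> r d \<le> 1"
    using inner_bounds(1)[OF K M g d r] by (simp add: subopt_def)
qed

lemma const_reward_subopt:
  fixes P :: "'s::finite \<Rightarrow> 's \<times> 'a::finite \<Rightarrow> real"
  assumes K: "is_kernel P" and M: "is_distr \<mu>0" and g: "\<gamma> < 1"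
    and d: "d \<in> Occ P \<mu>0 \<gamma>"
  shows "subopt P \<mu>0 \<gamma> (\<lambda>_. 1 / real (card (UNIV :: ('s \<times> 'a) set))) d = 0"
proof -
  have c: "inner_sa (\<lambda>_. 1 / real (card (UNIV :: ('s \<times> 'a) set))) d' = 1 / real (card (UNIV :: ('s \<times> 'a) set))"
    if "d' \<in> Occ P \<mu>0 \<gamma>" for d'
    using occ_sum[OF K M g that] by (simp add: inner_sa_def sum_divide_distrib[symmetric])
  have "(\<lambda>d'. inner_sa (\<lambda>_. 1 / real (card (UNIV :: ('s \<times> 'a) set))) d') ` Occ P \<mu>0 \<gamma> = {1 / real (card (UNIV :: ('s \<times> 'a) set))}"
    using c d by auto
  then show ?thesis using c[OF d] by (simp add: subopt_def)
qed

theorem mainTheorem5: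
  fixes P :: "'s::finite \<Rightarrow> 's \<times> 'a::finite \<Rightarrow> real"
    and \<mu>0 :: "'s \<Rightarrow> real" and \<gamma> :: real
    and D :: "(('s \<times> 'a \<Rightarrow> real) \<times> real) list"
    and de' :: "'s \<times> 'a \<Rightarrow> real" and \<epsilon>' :: real
    and Rstar :: "('s \<times> 'a \<Rightarrow> real) set"
  assumes "is_kernel P" and "is_distr \<mu>0" and "0 < \<gamma>" and "\<gamma> < 1"
    and "\<forall>(de, \<epsilon>) \<in> set D. de \<in> Occ P \<mu>0 \<gamma> \<and> \<epsilon> \<ge> 0"
    and "de' \<in> Occ P \<mu>0 \<gamma>" and "\<epsilon>' \<ge> 0"
    and "Rstar \<subseteq> Rewards"
    and "Rstar \<subseteq> RD P \<mu>0 \<gamma> D"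
    and "Rstar \<subseteq> RD P \<mu>0 \<gamma> (D @ [(de', \<epsilon>')])"
  shows "(Rstar \<subseteq> RD P \<mu>0 \<gamma> (D @ [(de', \<epsilon>')]) \<and>
          RD P \<mu>0 \<gamma> (D @ [(de', \<epsilon>')]) \<subset> RD P \<mu>0 \<gamma> D)
     \<longleftrightarrow> \<epsilon>' < Sup ((\<lambda>r. subopt P \<mu>0 \<gamma> r de') ` RD P \<mu>0 \<gamma> D)"
proof -
  note K = assms(1) and M = assms(2) and g = assms(4)
  let ?c = "\<lambda>_::'s \<times> 'a. 1 / real (card (UNIV :: ('s \<times> 'a) set))"
  have cR: "?c \<in> Rewards"
    by (simp add: Rewards_def is_distr_def)
  have "?c \<in> RD P \<mu>0 \<gamma> D"
    using cR assms(5) const_reward_subopt[OF K M g] unfolding RD_def by fastforce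
  then have ne: "(\<lambda>r. subopt P \<mu>0 \<gamma> r de') ` RD P \<mu>0 \<gamma> D \<noteq> {}" by blast
  have bdd: "bdd_above ((\<lambda>r. subopt P \<mu>0 \<gamma> r de') ` RD P \<mu>0 \<gamma> D)"
    using subopt_bounds(2)[OF K M g assms(6)] by (auto intro!: bdd_aboveI simp: RD_def)
  have eq: "RD P \<mu>0 \<gamma> (D @ [(de', \<epsilon>')]) = {r \<in> RD P \<mu>0 \<gamma> D. subopt P \<mu>0 \<gamma> r de' \<le> \<epsilon>'}"
    by (auto simp: RD_def)
  have "RD P \<mu>0 \<gamma> (D @ [(de', \<epsilon>')]) \<subset> RD P \<mu>0 \<gamma> D \<longleftrightarrow>
        (\<exists>r \<in> RD P \<mu>0 \<gamma> D. \<epsilon>' < subopt P \<mu>0 \<gamma> r de')"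
    unfolding eq by (auto simp: not_le) (metis (mono_tags, lifting) mem_Collect_eq not_le)
  also have "\<dots> \<longleftrightarrow> \<epsilon>' < Sup ((\<lambda>r. subopt P \<mu>0 \<gamma> r de') ` RD P \<mu>0 \<gamma> D)"
    using less_cSup_iff[OF ne bdd] by auto
  finally show ?thesis using assms(10) by blast
qed

end
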